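(* Fix $u\in W^{1,\gamma}(\Omega)$ and let $\mathcal{K}=\{(m,h)\in L^{\beta+1}(\Omega)\times L^{\gamma'}(\Gamma_D): m\ge0,\ h\ge0\}$. Then there exists a unique pair $(m_u,h_u)\in\mathcal{K}$ such that \[ \langle A_u(m_u,h_u),\,(\mu-m_u,\,k-h_u)\rangle\ge0\qquad\text{for all }(\mu,k)\in\mathcal{K}. \]
   Context: Setting. $\Omega\subset\mathbb{R}^d$ is open, bounded, connected, with $C^1$ boundary $\Gamma=\partial\Omega$; $ds$ denotes the surface measure $d\mathcal{H}^{d-1}$. $\Gamma=\overline{\Gamma_D\cup\Gamma_N}$, where $\Gamma_D,\Gamma_N$ are disjoint, nonempty, relatively open $C^1$ $(d-1)$-dimensional manifolds of positive $\mathcal{H}^{d-1}$-measure with $\mathcal{H}^{d-1}(\partial\Gamma_D\cap\partial\Gamma_N)=0$. Boundary values of Sobolev functions are traces. Exponents: $\alpha>1$, $\beta>0$, $\gamma=\frac{\beta+1}{\beta}\alpha$, $\gamma'=\gamma/(\gamma-1)$. Data: $j\in L^{\gamma'}(\Gamma_N)$, $j\ge0$, $j\not\equiv0$. $g:[0,\infty)\to\mathbb{R}$ is continuous and strictly increasing, and there is $C>1$ with $C^{-1}m^\beta-C\le g(m)\le Cm^\beta+C$ for all $m\ge0$. $H:\overline\Omega\times\mathbb{R}^d\to\mathbb{R}$ is measurable in $x$, and for a.e. $x$, $H(x,\cdot)\in C^1(\mathbb{R}^d)$ is convex; there is $C>1$ such that for a.e. $x\in\Omega$ and all $p\in\mathbb{R}^d$: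 $|D_pH(x,p)|\le C|p|^{\alpha-1}+C$, $H(x,0)\le C$, and one of the following holds: (a) $H(x,p)\ge C^{-1}|p|^\alpha-C$; (b) $D_pH(x,p)\cdot p\ge C^{-1}|p|^\alpha-C$ and $H(x,p)\ge -C$; (c) $-H(x,p)+D_pH(x,p)\cdot p\ge C^{-1}|p|^\alpha-C$ and $H(x,p)\ge-C$. Auxiliary operator. For fixed $u\in W^{1,\gamma}(\Omega)$, $A_u:L^{\beta+1}(\Omega)\times L^{\gamma'}(\Gamma_D)\to L^{\frac{\beta+1}{\beta}}(\Omega)\times L^\gamma(\Gamma_D)$ is defined (for nonnegative $(m,h)$) by \[\langle A_u(m,h),(\mu,k)\rangle=\int_\Omega(-H(x,Du)+g(m))\mu\,dx+\int_{\Gamma_D}(-u+h^{\gamma'-1})k\,ds.\] *)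

theory Defs
  imports "HOL-Analysis.Analysis"
begin

definition hausdorff_pre :: "nat \<Rightarrow> real \<Rightarrow> 'a::euclidean_space set \<Rightarrow> ennreal" where
  "hausdorff_pre s \<delta> A =
     (INF C \<in> {C :: nat \<Rightarrow> 'a set. A \<subseteq> (\<Union>i. C i) \<and> (\<forall>i. diameter (C i) \<le> \<delta>)}.
        (\<Sum>i. (if C i = {} then 0
               else ennreal (unit_ball_vol (real s) * (diameter (C i) / 2) ^ s))))"

definition hausdorff_outer :: "nat \<Rightarrow> 'a::euclidean_space set \<Rightarrow> ennreal" where
  "hausdorff_outer s A = (SUP \<delta> \<in> {0<..}. hausdorff_pre s \<delta> A)"

definition hausdorff_measure :: "nat \<Rightarrow> 'a::euclidean_space measure" where
  "hausdorff_measure s = measure_of UNIV (sets borel) (hausdorff_outer s)"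

definition surface :: "'a::euclidean_space set \<Rightarrow> 'a measure" where
  "surface S = restrict_space (hausdorff_measure (DIM('a) - 1)) S"

definition Lp_fun :: "'b measure \<Rightarrow> real \<Rightarrow> ('b \<Rightarrow> real) \<Rightarrow> bool" where
  "Lp_fun M p f \<longleftrightarrow> f \<in> borel_measurable M \<and> integrable M (\<lambda>x. \<bar>f x\<bar> powr p)"

definition Lp_vec :: "'b measure \<Rightarrow> real \<Rightarrow> ('b \<Rightarrow> 'a::euclidean_space) \<Rightarrow> bool" where
  "Lp_vec M p f \<longleftrightarrow> f \<in> borel_measurable M \<and> integrable M (\<lambda>x. norm (f x) powr p)"

definition C1_boundary :: "'a::euclidean_space set \<Rightarrow> bool" where
  "C1_boundary \<Omega> \<longleftrightarrow>
    (\<forall>x\<in>frontier \<Omega>. \<exists>r>0. \<exists>n::'a. \<exists>\<psi>::'a \<Rightarrow> real. \<exists>\<psi>'::'a \<Rightarrow> 'a.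
       norm n = 1 \<and> (\<forall>y. (\<psi> has_derivative (\<lambda>v. \<psi>' y \<bullet> v)) (at y)) \<and> continuous_on UNIV \<psi>' \<and>
       \<Omega> \<inter> ball x r = {y \<in> ball x r. y \<bullet> n > \<psi> (y - (y \<bullet> n) *\<^sub>R n)})"

definition weak_gradient :: "'a::euclidean_space set \<Rightarrow> ('a \<Rightarrow> real) \<Rightarrow> ('a \<Rightarrow> 'a) \<Rightarrow> bool" where
  "weak_gradient \<Omega> u Du \<longleftrightarrow>
    (\<forall>(\<phi>::'a \<Rightarrow> real) (\<phi>'::'a \<Rightarrow> 'a).
       (\<forall>x. (\<phi> has_derivative (\<lambda>v. \<phi>' x \<bullet> v)) (at x)) \<and> continuous_on UNIV \<phi>' \<and>
       compact (closure {x. \<phi> x \<noteq> 0}) \<and> closure {x. \<phi> x \<noteq> 0} \<subseteq> \<Omega> \<longrightarrow>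
       (\<forall>i\<in>Basis. integral\<^sup>L (lebesgue_on \<Omega>) (\<lambda>x. u x * (\<phi>' x \<bullet> i))
                  = - integral\<^sup>L (lebesgue_on \<Omega>) (\<lambda>x. (Du x \<bullet> i) * \<phi> x)))"

definition sobolev :: "'a::euclidean_space set \<Rightarrow> real \<Rightarrow> ('a \<Rightarrow> real) \<Rightarrow> ('a \<Rightarrow> 'a) \<Rightarrow> bool" where
  "sobolev \<Omega> p u Du \<longleftrightarrow>
     Lp_fun (lebesgue_on \<Omega>) p u \<and> Lp_vec (lebesgue_on \<Omega>) p Du \<and> weak_gradient \<Omega> u Du"

definition has_trace :: "'a::euclidean_space set \<Rightarrow> real \<Rightarrow> ('a \<Rightarrow> real) \<Rightarrow> ('a \<Rightarrow> 'a)
    \<Rightarrow> ('a \<Rightarrow> real) \<Rightarrow> bool" where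
  "has_trace \<Omega> p u Du Tu \<longleftrightarrow>
    Lp_fun (surface (frontier \<Omega>)) p Tu \<and>
    (\<exists>(\<phi>::nat \<Rightarrow> 'a \<Rightarrow> real) (\<phi>'::nat \<Rightarrow> 'a \<Rightarrow> 'a).
       (\<forall>n x. (\<phi> n has_derivative (\<lambda>v. \<phi>' n x \<bullet> v)) (at x)) \<and> (\<forall>n. continuous_on UNIV (\<phi>' n)) \<and>
       (\<lambda>n. integral\<^sup>L (lebesgue_on \<Omega>) (\<lambda>x. \<bar>\<phi> n x - u x\<bar> powr p)) \<longlonglongrightarrow> 0 \<and>
       (\<lambda>n. integral\<^sup>L (lebesgue_on \<Omega>) (\<lambda>x. norm (\<phi>' n x - Du x) powr p)) \<longlonglongrightarrow> 0 \<and>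
       (\<lambda>n. integral\<^sup>L (surface (frontier \<Omega>)) (\<lambda>x. \<bar>\<phi> n x - Tu x\<bar> powr p)) \<longlonglongrightarrow> 0)"

text \<open>pairing_A ... m h mu k = < A_u(m,h), (mu,k) >, where u enters through its weak gradient Du
  (in H(x,Du)) and its trace Tu (on Gamma_D).\<close>
definition pairing_A :: "'a::euclidean_space set \<Rightarrow> 'a set \<Rightarrow> ('a \<Rightarrow> 'a \<Rightarrow> real) \<Rightarrow> (real \<Rightarrow> real)
    \<Rightarrow> real \<Rightarrow> ('a \<Rightarrow> 'a) \<Rightarrow> ('a \<Rightarrow> real)
    \<Rightarrow> ('a \<Rightarrow> real) \<Rightarrow> ('a \<Rightarrow> real) \<Rightarrow> ('a \<Rightarrow> real) \<Rightarrow> ('a \<Rightarrow> real) \<Rightarrow> real" where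
  "pairing_A \<Omega> \<Gamma>D H g \<gamma>' Du Tu m h \<mu> k =
     integral\<^sup>L (lebesgue_on \<Omega>) (\<lambda>x. (- H x (Du x) + g (m x)) * \<mu> x)
   + integral\<^sup>L (surface \<Gamma>D) (\<lambda>x. (- Tu x + h x powr (\<gamma>' - 1)) * k x)"

definition K_set :: "'a::euclidean_space set \<Rightarrow> 'a set \<Rightarrow> real \<Rightarrow> real
    \<Rightarrow> (('a \<Rightarrow> real) \<times> ('a \<Rightarrow> real)) set" where
  "K_set \<Omega> \<Gamma>D \<beta> \<gamma>' = {(m, h).
      Lp_fun (lebesgue_on \<Omega>) (\<beta> + 1) m \<and> (AE x in lebesgue_on \<Omega>. m x \<ge> 0) \<and>
      Lp_fun (surface \<Gamma>D) \<gamma>' h \<and> (AE x in surface \<Gamma>D. h x \<ge> 0)}"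

end

theory Submission
  imports Defs
begin

lemma null_from_int:
  fixes M :: "'a measure" and f :: "'a \<Rightarrow> real"
  assumes E[measurable]: "E \<in> sets M" and Eint: "integrable M (\<lambda>x. indicator E x :: real)"
    and fE: "\<And>x. x \<in> E \<Longrightarrow> 0 < f x \<and> f x \<le> B"
    and f[measurable]: "f \<in> borel_measurable M"
    and I: "0 \<le> integral\<^sup>L M (\<lambda>x. - (indicator E x * f x))"
  shows "AE x in M. x \<notin> E"
proof -
  have qint: "integrable M (\<lambda>x. indicator E x * f x)"
  proof (rule Bochner_Integration.integrable_bound[where f="\<lambda>x. B * indicator E x"])
    show "integrable M (\<lambda>x. B * indicator E x)" using Eint by simp
    show "(\<lambda>x. indicator E x * f x) \<in> borel_measurable M" by measurable
    show "AE x in M. norm (indicator E x * f x) \<le> norm (B * indicator E x)"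
      using fE by (intro AE_I2) (force simp: indicator_def)
  qed
  have nn: "AE x in M. 0 \<le> indicator E x * f x"
    using fE by (auto simp: indicator_def less_imp_le)
  have "integral\<^sup>L M (\<lambda>x. indicator E x * f x) \<le> 0" using I by simp
  moreover have "0 \<le> integral\<^sup>L M (\<lambda>x. indicator E x * f x)"
    by (rule integral_nonneg_AE[OF nn])
  ultimately have "integral\<^sup>L M (\<lambda>x. indicator E x * f x) = 0" by linarith
  then have "AE x in M. indicator E x * f x = 0"
    using integral_nonneg_eq_0_iff_AE[OF qint nn] by simp
  then show ?thesis
  proof (rule eventually_mono)
    fix x assume "indicator E x * f x = 0"
    then show "x \<notin> E" using fE[of x] by (cases "x \<in> E") auto
  qed
qed

lemma vi_pointwise:
  fixes M :: "'a measure" and \<phi> v :: "'a \<Rightarrow> real" and S :: "nat \<Rightarrow> 'a set"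
  assumes phi[measurable]: "\<phi> \<in> borel_measurable M"
    and vLp: "Lp_fun M p v" and vnn: "AE x in M. 0 \<le> v x" and p: "p > 0"
    and S[measurable]: "\<And>n. S n \<in> sets M"
    and Sint: "\<And>n. integrable M (\<lambda>x. indicator (S n) x :: real)"
    and cover: "AE x in M. (\<phi> x < 0 \<or> (0 < v x \<and> 0 < \<phi> x)) \<longrightarrow> (\<exists>n. x \<in> S n)"
    and VI: "\<And>k. Lp_fun M p k \<Longrightarrow> (AE x in M. 0 \<le> k x) \<Longrightarrow>
               0 \<le> integral\<^sup>L M (\<lambda>x. \<phi> x * (k x - v x))"
  shows "AE x in M. 0 \<le> \<phi> x \<and> (0 < v x \<longrightarrow> \<phi> x = 0)"
proof -
  have v[measurable]: "v \<in> borel_measurable M" and vint: "integrable M (\<lambda>x. \<bar>v x\<bar> powr p)"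
    using vLp by (auto simp: Lp_fun_def)
  have subint: "integrable M (\<lambda>x. indicator E x :: real)" if "E \<in> sets M" "E \<subseteq> S n" for E n
  proof (rule Bochner_Integration.integrable_bound[OF Sint[of n]])
    show "indicat_real E \<in> borel_measurable M" using that by measurable
    show "AE x in M. norm (indicat_real E x) \<le> norm (indicat_real (S n) x)"
      using that by (auto simp: indicator_def)
  qed
  define E1 where "E1 n N = {x \<in> space M. \<phi> x < 0 \<and> \<bar>\<phi> x\<bar> \<le> real N \<and> \<bar>v x\<bar> \<le> real N} \<inter> S n" for n N
  define E2 where "E2 n N = {x \<in> space M. 0 < v x \<and> 0 < \<phi> x \<and> \<bar>\<phi> x\<bar> \<le> real N \<and> \<bar>v x\<bar> \<le> real N} \<inter> S n" for n N
  have E1m[measurable]: "E1 n N \<in> sets M" for n N unfolding E1_def by measurable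
  have E2m[measurable]: "E2 n N \<in> sets M" for n N unfolding E2_def by measurable
  have A1: "AE x in M. x \<notin> E1 n N" for n N
  proof -
    define k where "k x = v x + indicator (E1 n N) x" for x
    have km[measurable]: "k \<in> borel_measurable M" unfolding k_def by measurable
    have Eint: "integrable M (\<lambda>x. indicator (E1 n N) x :: real)"
      by (rule subint[OF E1m]) (auto simp: E1_def)
    have "Lp_fun M p k"
      unfolding Lp_fun_def
    proof (intro conjI km)
     show "integrable M (\<lambda>x. \<bar>k x\<bar> powr p)"
     proof (rule Bochner_Integration.integrable_bound[where f="\<lambda>x. \<bar>v x\<bar> powr p + (real N + 1) powr p * indicator (E1 n N) x"])
      show "integrable M (\<lambda>x. \<bar>v x\<bar> powr p + (real N + 1) powr p * indicator (E1 n N) x)"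
        using vint Eint by simp
      show "(\<lambda>x. \<bar>k x\<bar> powr p) \<in> borel_measurable M" by measurable
      show "AE x in M. norm (\<bar>k x\<bar> powr p) \<le> norm (\<bar>v x\<bar> powr p + (real N + 1) powr p * indicator (E1 n N) x)"
      proof (rule AE_I2)
        fix x assume "x \<in> space M"
        show "norm (\<bar>k x\<bar> powr p) \<le> norm (\<bar>v x\<bar> powr p + (real N + 1) powr p * indicator (E1 n N) x)"
        proof (cases "x \<in> E1 n N")
          case True
          then have "\<bar>k x\<bar> \<le> real N + 1" by (auto simp: k_def E1_def)
          then have "\<bar>k x\<bar> powr p \<le> (real N + 1) powr p" using p by (intro powr_mono2) auto
          then show ?thesis using True by (simp add: add_increasing)
        next
          case False then show ?thesis by (simp add: k_def)
        qed
      qed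
     qed
    qed
    moreover have "AE x in M. 0 \<le> k x" using vnn by eventually_elim (simp add: k_def)
    ultimately have I: "0 \<le> integral\<^sup>L M (\<lambda>x. \<phi> x * (k x - v x))" by (rule VI)
    have "(\<lambda>x. \<phi> x * (k x - v x)) = (\<lambda>x. - (indicator (E1 n N) x * (- \<phi> x)))"
      by (auto simp: k_def indicator_def)
    with I have I': "0 \<le> integral\<^sup>L M (\<lambda>x. - (indicator (E1 n N) x * (- \<phi> x)))" by simp
    show ?thesis
    proof (rule null_from_int[OF E1m Eint, where B="real N" and f="\<lambda>x. - \<phi> x", OF _ _ I'])
      show "\<And>x. x \<in> E1 n N \<Longrightarrow> 0 < - \<phi> x \<and> - \<phi> x \<le> real N" by (auto simp: E1_def)
    qed measurable
  qed
  have A2: "AE x in M. x \<notin> E2 n N" for n N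
  proof -
    define k where "k x = (if x \<in> E2 n N then 0 else v x)" for x
    have km[measurable]: "k \<in> borel_measurable M" unfolding k_def by measurable
    have Eint: "integrable M (\<lambda>x. indicator (E2 n N) x :: real)"
      by (rule subint[OF E2m]) (auto simp: E2_def)
    have "Lp_fun M p k"
      unfolding Lp_fun_def
    proof (intro conjI km)
     show "integrable M (\<lambda>x. \<bar>k x\<bar> powr p)"
     proof (rule Bochner_Integration.integrable_bound[where f="\<lambda>x. \<bar>v x\<bar> powr p"])
      show "integrable M (\<lambda>x. \<bar>v x\<bar> powr p)" using vint by simp
      show "(\<lambda>x. \<bar>k x\<bar> powr p) \<in> borel_measurable M" by measurable
      show "AE x in M. norm (\<bar>k x\<bar> powr p) \<le> norm (\<bar>v x\<bar> powr p)"
        by (auto simp: k_def)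
     qed
    qed
    moreover have "AE x in M. 0 \<le> k x" using vnn by eventually_elim (simp add: k_def)
    ultimately have I: "0 \<le> integral\<^sup>L M (\<lambda>x. \<phi> x * (k x - v x))" by (rule VI)
    have "(\<lambda>x. \<phi> x * (k x - v x)) = (\<lambda>x. - (indicator (E2 n N) x * (\<phi> x * v x)))"
      by (auto simp: k_def indicator_def)
    with I have I': "0 \<le> integral\<^sup>L M (\<lambda>x. - (indicator (E2 n N) x * (\<phi> x * v x)))" by simp
    show ?thesis
    proof (rule null_from_int[OF E2m Eint, where B="real N * real N" and f="\<lambda>x. \<phi> x * v x", OF _ _ I'])
      fix x assume "x \<in> E2 n N"
      then show "0 < \<phi> x * v x \<and> \<phi> x * v x \<le> real N * real N"
        by (auto simp: E2_def intro!: mult_mono)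
    qed measurable
  qed
  have "AE x in M. x \<notin> E1 n N \<and> x \<notin> E2 n N" for n N
    using A1[of n N] A2[of n N] by (rule AE_conjI)
  then have "AE x in M. \<forall>N. x \<notin> E1 n N \<and> x \<notin> E2 n N" for n
    by (subst AE_all_countable) blast
  then have "AE x in M. \<forall>n N. x \<notin> E1 n N \<and> x \<notin> E2 n N"
    by (subst AE_all_countable) blast
  with cover AE_space show ?thesis
  proof eventually_elim
    case (elim x)
    then have h: "(\<phi> x < 0 \<or> 0 < v x \<and> 0 < \<phi> x) \<longrightarrow> (\<exists>n. x \<in> S n)"
      and x: "x \<in> space M" and nE: "\<forall>n N. x \<notin> E1 n N \<and> x \<notin> E2 n N" by auto
    define N where "N = nat \<lceil>max \<bar>\<phi> x\<bar> \<bar>v x\<bar>\<rceil>"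
    have "max \<bar>\<phi> x\<bar> \<bar>v x\<bar> \<le> real N" unfolding N_def by (rule real_nat_ceiling_ge)
    then have N: "\<bar>\<phi> x\<bar> \<le> real N" "\<bar>v x\<bar> \<le> real N" by simp_all
    show "0 \<le> \<phi> x \<and> (0 < v x \<longrightarrow> \<phi> x = 0)"
    proof (rule ccontr)
      assume "\<not> ?thesis"
      then have "\<phi> x < 0 \<or> 0 < v x \<and> 0 < \<phi> x" by auto
      with h obtain n where "x \<in> S n" by auto
      then have "\<not> (\<phi> x < 0 \<and> \<bar>\<phi> x\<bar> \<le> real N \<and> \<bar>v x\<bar> \<le> real N)"
        "\<not> (0 < v x \<and> 0 < \<phi> x \<and> \<bar>\<phi> x\<bar> \<le> real N \<and> \<bar>v x\<bar> \<le> real N)"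
        using nE x unfolding E1_def E2_def by blast+
      with N \<open>\<phi> x < 0 \<or> 0 < v x \<and> 0 < \<phi> x\<close> show False by blast
    qed
  qed
qed

lemma floor_aux:
  fixes c t :: real
  assumes c: "0 < c"
  shows "t - inverse c \<le> real_of_int \<lfloor>c * t\<rfloor> / c" "real_of_int \<lfloor>c * t\<rfloor> / c \<le> t"
proof -
  have a: "c * t - 1 \<le> real_of_int \<lfloor>c * t\<rfloor>"
    using real_of_int_floor_add_one_gt[of "c * t"] by linarith
  have b: "real_of_int \<lfloor>c * t\<rfloor> \<le> c * t" by (rule of_int_floor_le)
  have e: "t - inverse c = (c * t - 1) / c" using c by (simp add: field_simps)
  show "t - inverse c \<le> real_of_int \<lfloor>c * t\<rfloor> / c"
    unfolding e using a c by (intro divide_right_mono) auto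
  show "real_of_int \<lfloor>c * t\<rfloor> / c \<le> t"
    using b c by (simp add: pos_divide_le_eq mult.commute)
qed

lemma floor_approx:
  fixes t :: real
  shows "(\<lambda>n. real_of_int \<lfloor>real (Suc n) * t\<rfloor> / real (Suc n)) \<longlonglongrightarrow> t"
proof (rule tendsto_sandwich[where f="\<lambda>n. t - inverse (real (Suc n))" and h="\<lambda>n. t"])
  show "\<forall>\<^sub>F n in sequentially. t - inverse (real (Suc n)) \<le> real_of_int \<lfloor>real (Suc n) * t\<rfloor> / real (Suc n)"
    by (intro always_eventually allI floor_aux) simp
  show "\<forall>\<^sub>F n in sequentially. real_of_int \<lfloor>real (Suc n) * t\<rfloor> / real (Suc n) \<le> t"
    by (intro always_eventually allI floor_aux) simp
  show "(\<lambda>n. t - inverse (real (Suc n))) \<longlonglongrightarrow> t"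
    using tendsto_diff[OF tendsto_const LIMSEQ_inverse_real_of_nat, of t] by simp
qed simp

definition rgrid :: "nat \<Rightarrow> 'a::euclidean_space \<Rightarrow> 'a" where
  "rgrid n v = (\<Sum>i\<in>Basis. (real_of_int \<lfloor>real (Suc n) * (v \<bullet> i)\<rfloor> / real (Suc n)) *\<^sub>R i)"

lemma rgrid_tendsto: "(\<lambda>n. rgrid n v) \<longlonglongrightarrow> v"
proof -
  have "(\<lambda>n. rgrid n v) \<longlonglongrightarrow> (\<Sum>i\<in>Basis. (v \<bullet> i) *\<^sub>R i)"
    unfolding rgrid_def by (intro tendsto_intros floor_approx)
  then show ?thesis by (simp add: euclidean_representation)
qed

lemma caratheodory_measurable:
  fixes H :: "'a::euclidean_space \<Rightarrow> 'a \<Rightarrow> real" and Du :: "'a \<Rightarrow> 'a"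
  assumes Om: "\<Omega> \<in> sets lebesgue"
    and Hm: "\<And>p. (\<lambda>x. H x p) \<in> borel_measurable (lebesgue_on \<Omega>)"
    and Dum[measurable]: "Du \<in> borel_measurable (lebesgue_on \<Omega>)"
    and Hc: "AE x in lebesgue_on \<Omega>. continuous_on UNIV (H x)"
  shows "(\<lambda>x. H x (Du x)) \<in> borel_measurable (lebesgue_on \<Omega>)"
proof -
  let ?M = "lebesgue_on \<Omega>"
  have mn: "(\<lambda>x. H x (rgrid n (Du x))) \<in> borel_measurable ?M" for n
  proof -
    define I where "I = (Basis \<rightarrow>\<^sub>E (UNIV :: int set) :: ('a \<Rightarrow> int) set)"
    define gg where "gg x = restrict (\<lambda>i. \<lfloor>real (Suc n) * (Du x \<bullet> i)\<rfloor>) Basis" for x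
    define ff where "ff k x = H x (\<Sum>i\<in>Basis. (real_of_int (k i) / real (Suc n)) *\<^sub>R i)" for k x
    have cI: "countable I" unfolding I_def by (intro countable_PiE) auto
    have eq: "ff (gg x) x = H x (rgrid n (Du x))" for x
      unfolding ff_def gg_def rgrid_def by (intro arg_cong[where f="H x"] sum.cong) auto
    have "(\<lambda>x. ff (gg x) x) \<in> borel_measurable ?M"
    proof (rule measurable_compose_countable'[OF _ _ cI])
      show "\<And>k. k \<in> I \<Longrightarrow> (\<lambda>x. ff k x) \<in> borel_measurable ?M"
        unfolding ff_def using Hm by blast
      show "gg \<in> ?M \<rightarrow>\<^sub>M count_space I"
        unfolding measurable_count_space_eq_countable[OF cI]
      proof safe
        show "\<And>x. x \<in> space ?M \<Longrightarrow> gg x \<in> I" by (auto simp: gg_def I_def)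
        fix a assume "a \<in> I"
        then have "gg -` {a} \<inter> space ?M = {x \<in> space ?M. \<forall>i\<in>Basis. \<lfloor>real (Suc n) * (Du x \<bullet> i)\<rfloor> = a i}"
          by (auto simp: gg_def I_def PiE_def extensional_def fun_eq_iff)
        also have "\<dots> \<in> sets ?M" by measurable
        finally show "gg -` {a} \<inter> space ?M \<in> sets ?M" .
      qed
    qed
    then show ?thesis by (simp add: eq)
  qed
  define F where "F x = lim (\<lambda>n. H x (rgrid n (Du x)))" for x
  have Fm: "F \<in> borel_measurable ?M"
    unfolding F_def by (rule borel_measurable_lim_metric[OF mn])
  have FAE: "AE x in ?M. F x = H x (Du x)"
    using Hc
  proof eventually_elim
    case (elim x)
    have "(\<lambda>n. H x (rgrid n (Du x))) \<longlonglongrightarrow> H x (Du x)"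
      using continuous_on_tendsto_compose[OF elim rgrid_tendsto] by simp
    then show ?case unfolding F_def by (rule limI)
  qed
  have Om': "\<Omega> \<inter> space lebesgue \<in> sets lebesgue" using Om by simp
  have "(\<lambda>x. indicator \<Omega> x *\<^sub>R F x) \<in> borel_measurable lebesgue"
    using Fm unfolding borel_measurable_restrict_space_iff[OF Om'] .
  moreover have "AE x in lebesgue. indicator \<Omega> x *\<^sub>R F x = indicator \<Omega> x *\<^sub>R H x (Du x)"
  proof -
    have "AE x in lebesgue. x \<in> \<Omega> \<longrightarrow> F x = H x (Du x)"
      using FAE unfolding AE_restrict_space_iff[OF Om'] .
    then show ?thesis by (rule eventually_mono) (auto simp: indicator_def)
  qed
  ultimately have "(\<lambda>x. indicator \<Omega> x *\<^sub>R H x (Du x)) \<in> borel_measurable lebesgue"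
    by (rule borel_measurable_AE)
  then show ?thesis
    unfolding borel_measurable_restrict_space_iff[OF Om'] .
qed

lemma H_growth:
  fixes h :: "'a::euclidean_space \<Rightarrow> real" and dh :: "'a \<Rightarrow> 'a"
  assumes hd: "\<And>p. (h has_derivative (\<lambda>q. dh p \<bullet> q)) (at p)"
    and db: "\<And>p. norm (dh p) \<le> C * norm p powr (\<alpha> - 1) + C"
    and h0: "h 0 \<le> C" and hlow: "\<And>p. - C \<le> h p" and \<alpha>: "1 < \<alpha>" and C: "1 < C"
  shows "\<bar>h p\<bar> \<le> 3 * C * (1 + norm p powr \<alpha>)"
proof -
  define B where "B = C * norm p powr (\<alpha> - 1) + C"
  have "norm (h p - h 0) \<le> B * norm (p - 0)"
  proof (rule differentiable_bound[where S="cball 0 (norm p)" and f'="\<lambda>y q. dh y \<bullet> q"])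
    show "convex (cball (0::'a) (norm p))" by simp
    show "(h has_derivative (\<lambda>q. dh y \<bullet> q)) (at y within cball 0 (norm p))" for y
      using hd[of y] by (rule has_derivative_at_withinI)
    show "onorm (\<lambda>q. dh y \<bullet> q) \<le> B" if y: "y \<in> cball 0 (norm p)" for y
    proof -
      have "onorm (\<lambda>q. dh y \<bullet> q) \<le> norm (dh y)"
        by (rule onorm_le) (simp add: Cauchy_Schwarz_ineq2)
      also have "norm (dh y) \<le> C * norm y powr (\<alpha> - 1) + C" by (rule db)
      also have "norm y powr (\<alpha> - 1) \<le> norm p powr (\<alpha> - 1)"
        using y \<alpha> by (intro powr_mono2) auto
      then have "C * norm y powr (\<alpha> - 1) + C \<le> B"
        unfolding B_def using C by (intro add_right_mono mult_left_mono) auto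
      finally show ?thesis .
    qed
  qed auto
  then have hp: "h p \<le> C + B * norm p" using h0 by simp
  have np: "norm p powr (\<alpha> - 1) * norm p = norm p powr \<alpha>"
  proof (cases "p = 0")
    case True then show ?thesis by simp
  next
    case False
    have "norm p powr \<alpha> = norm p powr (\<alpha> - 1) * norm p powr 1"
      using powr_add[of "norm p" "\<alpha> - 1" 1] by simp
    then show ?thesis by simp
  qed
  have n1: "norm p \<le> 1 + norm p powr \<alpha>"
  proof (cases "norm p \<le> 1")
    case True then show ?thesis by (simp add: add_increasing2)
  next
    case False
    then have "norm p powr 1 \<le> norm p powr \<alpha>" using \<alpha> by (intro powr_mono) auto
    then show ?thesis by simp
  qed
  have "B * norm p = C * norm p powr \<alpha> + C * norm p"
    unfolding B_def using np by (simp add: algebra_simps)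
  also have "\<dots> \<le> C * norm p powr \<alpha> + C * (1 + norm p powr \<alpha>)"
    using n1 C by (intro add_left_mono mult_left_mono) auto
  finally have "h p \<le> 2 * C + 2 * C * norm p powr \<alpha>" using hp by (simp add: algebra_simps)
  moreover have "0 \<le> C * norm p powr \<alpha>" using C by simp
  moreover have "- C \<le> h p" by (rule hlow)
  ultimately show ?thesis by (simp add: algebra_simps abs_le_iff)
qed

lemma m_bound:
  fixes m t A \<beta> \<alpha> :: real
  assumes m: "0 \<le> m" and t: "0 \<le> t" and \<beta>: "0 < \<beta>" and \<alpha>: "0 \<le> \<alpha>" and A: "0 < A"
    and mb: "m powr \<beta> \<le> A * (1 + t powr \<alpha>)"
  shows "m powr (\<beta> + 1) \<le> (2 * A) powr ((\<beta> + 1) / \<beta>) * (1 + t powr ((\<beta> + 1) / \<beta> * \<alpha>))"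
proof -
  define s where "s = max 1 t"
  have s1: "1 \<le> s" unfolding s_def by simp
  have "t powr \<alpha> \<le> s powr \<alpha>" using t \<alpha> by (intro powr_mono2) (auto simp: s_def)
  moreover have "1 \<le> s powr \<alpha>" using s1 \<alpha> by (rule ge_one_powr_ge_zero)
  ultimately have "A * t powr \<alpha> \<le> A * s powr \<alpha>" "A * 1 \<le> A * s powr \<alpha>"
    using A by (intro mult_left_mono; simp)+
  then have "A * (1 + t powr \<alpha>) \<le> 2 * A * s powr \<alpha>" by (simp add: algebra_simps)
  with mb have mb2: "m powr \<beta> \<le> 2 * A * s powr \<alpha>" by linarith
  define e where "e = (\<beta> + 1) / \<beta>"
  have e0: "0 \<le> e" unfolding e_def using \<beta> by simp
  have "m powr (\<beta> + 1) = (m powr \<beta>) powr e"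
    unfolding e_def using \<beta> by (simp add: powr_powr)
  also have "\<dots> \<le> (2 * A * s powr \<alpha>) powr e"
    using mb2 e0 by (intro powr_mono2) auto
  also have "\<dots> = (2 * A) powr e * s powr (e * \<alpha>)"
    by (simp add: powr_mult powr_powr mult.commute)
  also have "s powr (e * \<alpha>) \<le> 1 + t powr (e * \<alpha>)"
  proof (cases "t \<le> 1")
    case True then show ?thesis by (simp add: s_def)
  next
    case False then show ?thesis by (simp add: s_def)
  qed
  then have "(2 * A) powr e * s powr (e * \<alpha>) \<le> (2 * A) powr e * (1 + t powr (e * \<alpha>))"
    by (intro mult_left_mono) auto
  finally show ?thesis unfolding e_def .
qed

lemma lebesgue_on_AE_meas:
  fixes f g :: "'a::euclidean_space \<Rightarrow> real"
  assumes Om: "\<Omega> \<in> sets lebesgue" and f: "f \<in> borel_measurable (lebesgue_on \<Omega>)"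
    and ae: "AE x in lebesgue_on \<Omega>. f x = g x"
  shows "g \<in> borel_measurable (lebesgue_on \<Omega>)"
proof -
  have Om': "\<Omega> \<inter> space lebesgue \<in> sets lebesgue" using Om by simp
  have "(\<lambda>x. indicator \<Omega> x *\<^sub>R f x) \<in> borel_measurable lebesgue"
    using f unfolding borel_measurable_restrict_space_iff[OF Om'] .
  moreover have "AE x in lebesgue. indicator \<Omega> x *\<^sub>R f x = indicator \<Omega> x *\<^sub>R g x"
  proof -
    have "AE x in lebesgue. x \<in> \<Omega> \<longrightarrow> f x = g x"
      using ae unfolding AE_restrict_space_iff[OF Om'] .
    then show ?thesis by (rule eventually_mono) (auto simp: indicator_def)
  qed
  ultimately have "(\<lambda>x. indicator \<Omega> x *\<^sub>R g x) \<in> borel_measurable lebesgue"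
    by (rule borel_measurable_AE)
  then show ?thesis
    unfolding borel_measurable_restrict_space_iff[OF Om'] .
qed

lemma Lp_restrict:
  assumes L: "Lp_fun M p f" and A: "A \<in> sets M"
  shows "Lp_fun (restrict_space M A) p f"
proof -
  have A': "A \<inter> space M \<in> sets M" using A by simp
  from L have fm: "f \<in> borel_measurable M" and fi: "integrable M (\<lambda>x. \<bar>f x\<bar> powr p)"
    by (auto simp: Lp_fun_def)
  have "f \<in> borel_measurable (restrict_space M A)" using fm by (rule measurable_restrict_space1)
  moreover have "integrable (restrict_space M A) (\<lambda>x. \<bar>f x\<bar> powr p)"
    unfolding integrable_restrict_space[OF A'] using integrable_mult_indicator[OF A fi] .
  ultimately show ?thesis by (simp add: Lp_fun_def)
qed

lemma hm_sets: "sets (hausdorff_measure k :: 'a::euclidean_space measure) = sets borel"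
  unfolding hausdorff_measure_def
  by (subst sets_measure_of) (auto simp: sets.sigma_sets_eq[of borel, simplified])

lemma hm_space: "space (hausdorff_measure k :: 'a::euclidean_space measure) = UNIV"
  unfolding hausdorff_measure_def by (simp add: space_measure_of_conv)

lemma surface_restrict:
  fixes D F :: "'a::euclidean_space set"
  assumes DF: "D \<subseteq> F" and D: "D \<in> sets borel" and F: "F \<in> sets borel"
  shows "surface D = restrict_space (surface F) D"
proof -
  let ?H = "hausdorff_measure (DIM('a) - 1) :: 'a measure"
  have "restrict_space (restrict_space ?H F) D = restrict_space ?H (F \<inter> D)"
    by (rule restrict_restrict_space) (use D F in \<open>auto simp: hm_sets hm_space\<close>)
  also have "F \<inter> D = D" using DF by auto
  finally show ?thesis unfolding surface_def by simp
qed

lemma surface_sets_sub: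
  fixes D F :: "'a::euclidean_space set"
  assumes DF: "D \<subseteq> F" and D: "D \<in> sets borel" and F: "F \<in> sets borel"
  shows "D \<in> sets (surface F)"
  unfolding surface_def sets_restrict_space using DF D
  by (auto simp: hm_sets image_iff intro!: bexI[of _ D])

theorem theorem5p1:
  fixes \<Omega> \<Gamma>D \<Gamma>N :: "'a::euclidean_space set"
    and \<alpha> \<beta> \<gamma> \<gamma>' :: real
    and j :: "'a \<Rightarrow> real"
    and g :: "real \<Rightarrow> real"
    and H :: "'a \<Rightarrow> 'a \<Rightarrow> real" and DH :: "'a \<Rightarrow> 'a \<Rightarrow> 'a"
    and u :: "'a \<Rightarrow> real" and Du :: "'a \<Rightarrow> 'a" and Tu :: "'a \<Rightarrow> real"
  assumes dom: "open \<Omega>" "bounded \<Omega>" "connected \<Omega>" "C1_boundary \<Omega>"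
    and bdry: "frontier \<Omega> = closure (\<Gamma>D \<union> \<Gamma>N)" "\<Gamma>D \<inter> \<Gamma>N = {}"
      "\<Gamma>D \<noteq> {}" "\<Gamma>N \<noteq> {}"
      "openin (top_of_set (frontier \<Omega>)) \<Gamma>D" "openin (top_of_set (frontier \<Omega>)) \<Gamma>N"
      "emeasure (hausdorff_measure (DIM('a) - 1)) \<Gamma>D > 0"
      "emeasure (hausdorff_measure (DIM('a) - 1)) \<Gamma>N > 0"
      "emeasure (hausdorff_measure (DIM('a) - 1)) ((closure \<Gamma>D - \<Gamma>D) \<inter> (closure \<Gamma>N - \<Gamma>N)) = 0"
    and expo: "\<alpha> > 1" "\<beta> > 0" "\<gamma> = (\<beta> + 1) / \<beta> * \<alpha>" "\<gamma>' = \<gamma> / (\<gamma> - 1)"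
    and jdata: "Lp_fun (surface \<Gamma>N) \<gamma>' j" "AE x in surface \<Gamma>N. j x \<ge> 0"
      "\<not> (AE x in surface \<Gamma>N. j x = 0)"
    and gcond: "continuous_on {0..} g" "strict_mono_on {0..} g"
      "\<exists>C>1. \<forall>m\<ge>0. m powr \<beta> / C - C \<le> g m \<and> g m \<le> C * m powr \<beta> + C"
    and Hmeas: "\<forall>p. (\<lambda>x. H x p) \<in> borel_measurable (lebesgue_on \<Omega>)"
    and Hreg: "AE x in lebesgue_on \<Omega>. convex_on UNIV (H x) \<and>
                 (\<forall>p. (H x has_derivative (\<lambda>q. DH x p \<bullet> q)) (at p)) \<and> continuous_on UNIV (DH x)"
    and Hbounds: "\<exists>C>1.
        (AE x in lebesgue_on \<Omega>. \<forall>p. norm (DH x p) \<le> C * norm p powr (\<alpha> - 1) + C \<and> H x 0 \<le> C) \<and>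
        ((AE x in lebesgue_on \<Omega>. \<forall>p. H x p \<ge> norm p powr \<alpha> / C - C)
         \<or> (AE x in lebesgue_on \<Omega>. \<forall>p. DH x p \<bullet> p \<ge> norm p powr \<alpha> / C - C \<and> H x p \<ge> - C)
         \<or> (AE x in lebesgue_on \<Omega>. \<forall>p. - H x p + DH x p \<bullet> p \<ge> norm p powr \<alpha> / C - C \<and> H x p \<ge> - C))"
    and u_sob: "sobolev \<Omega> \<gamma> u Du"
    and u_trace: "has_trace \<Omega> \<gamma> u Du Tu"
  shows "\<exists>m h. (m, h) \<in> K_set \<Omega> \<Gamma>D \<beta> \<gamma>' \<and>
           (\<forall>\<mu> k. (\<mu>, k) \<in> K_set \<Omega> \<Gamma>D \<beta> \<gamma>' \<longrightarrow>
              pairing_A \<Omega> \<Gamma>D H g \<gamma>' Du Tu m h (\<lambda>x. \<mu> x - m x) (\<lambda>x. k x - h x) \<ge> 0) \<and>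
           (\<forall>m' h'. (m', h') \<in> K_set \<Omega> \<Gamma>D \<beta> \<gamma>' \<and>
              (\<forall>\<mu> k. (\<mu>, k) \<in> K_set \<Omega> \<Gamma>D \<beta> \<gamma>' \<longrightarrow>
                 pairing_A \<Omega> \<Gamma>D H g \<gamma>' Du Tu m' h' (\<lambda>x. \<mu> x - m' x) (\<lambda>x. k x - h' x) \<ge> 0)
              \<longrightarrow> (AE x in lebesgue_on \<Omega>. m' x = m x) \<and> (AE x in surface \<Gamma>D. h' x = h x))"
proof -
  let ?M = "lebesgue_on \<Omega>"
  let ?SD = "surface \<Gamma>D"
  let ?SF = "surface (frontier \<Omega>)"
  have Oml: "\<Omega> \<in> sets lebesgue" using dom(1) by (metis borel_open sets_completionI_sets sets_lborel)
  have spM: "space ?M = \<Omega>" using Oml by simp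
  have "emeasure ?M (space ?M) = emeasure lebesgue \<Omega>"
    unfolding spM using Oml by (subst emeasure_restrict_space) auto
  also have "\<dots> = emeasure lborel \<Omega>" using dom(1) by (simp add: borel_open)
  also have "\<dots> < \<infinity>" using dom(2) by (rule emeasure_bounded_finite)
  finally have finM: "finite_measure ?M" by (intro finite_measureI) auto
  have intc: "integrable ?M (\<lambda>x. c)" for c :: real
    using finite_measure.integrable_const[OF finM] .
  have intS: "integrable ?M (\<lambda>x. indicator (space ?M) x :: real)"
    using finite_measure.emeasure_finite[OF finM, of "space ?M"]
    by (simp add: integrable_indicator_iff top.not_eq_extremum)
  have bp: "(\<beta> + 1) / \<beta> > 1" using expo(2) by (simp add: field_simps)
  have g1: "1 < \<gamma>"
  proof -
    have "1 * \<alpha> < (\<beta> + 1) / \<beta> * \<alpha>" using expo(1) by (intro mult_strict_right_mono[OF bp]) auto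
    then show ?thesis using expo(1,3) by linarith
  qed
  have gp_eq: "\<gamma>' - 1 = 1 / (\<gamma> - 1)" using g1 expo(4) by (simp add: field_simps)
  have e1: "(\<gamma> - 1) * \<gamma>' = \<gamma>" using g1 expo(4) by (simp add: field_simps)
  have e2: "(\<gamma> - 1) * (\<gamma>' - 1) = 1" using g1 gp_eq by simp
  have gp0: "0 < \<gamma>'" using g1 expo(4) by simp
  have FB: "frontier \<Omega> \<in> sets borel" by (simp add: borel_closed)
  have DF: "\<Gamma>D \<subseteq> frontier \<Omega>" using bdry(5) by (rule openin_imp_subset)
  have DB: "\<Gamma>D \<in> sets borel"
  proof -
    obtain U where "open U" "\<Gamma>D = frontier \<Omega> \<inter> U" using bdry(5) unfolding openin_open by blast
    then show ?thesis using FB by (simp add: borel_open sets.Int)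
  qed
  have SDeq: "?SD = restrict_space ?SF \<Gamma>D" by (rule surface_restrict[OF DF DB FB])
  have DinSF: "\<Gamma>D \<in> sets ?SF" by (rule surface_sets_sub[OF DF DB FB])
  have TuF: "Lp_fun ?SF \<gamma> Tu" using u_trace by (simp add: has_trace_def)
  have TuD: "Lp_fun ?SD \<gamma> Tu" unfolding SDeq by (rule Lp_restrict[OF TuF DinSF])
  have Tum[measurable]: "Tu \<in> borel_measurable ?SD" and Tui: "integrable ?SD (\<lambda>x. \<bar>Tu x\<bar> powr \<gamma>)"
    using TuD by (auto simp: Lp_fun_def)
  have Dum[measurable]: "Du \<in> borel_measurable ?M" and Dui: "integrable ?M (\<lambda>x. norm (Du x) powr \<gamma>)"
    using u_sob by (auto simp: sobolev_def Lp_vec_def)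
  obtain Cg where Cg: "Cg > 1" "\<And>m. m \<ge> 0 \<Longrightarrow> m powr \<beta> / Cg - Cg \<le> g m"
    using gcond(3) by blast
  obtain CH where CH: "CH > 1"
    and HB1: "AE x in ?M. \<forall>p. norm (DH x p) \<le> CH * norm p powr (\<alpha> - 1) + CH \<and> H x 0 \<le> CH"
    and Hdisj: "(AE x in ?M. \<forall>p. H x p \<ge> norm p powr \<alpha> / CH - CH)
         \<or> (AE x in ?M. \<forall>p. DH x p \<bullet> p \<ge> norm p powr \<alpha> / CH - CH \<and> H x p \<ge> - CH)
         \<or> (AE x in ?M. \<forall>p. - H x p + DH x p \<bullet> p \<ge> norm p powr \<alpha> / CH - CH \<and> H x p \<ge> - CH)"
    using Hbounds by blast
  have Hlow: "AE x in ?M. \<forall>p. - CH \<le> H x p"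
    using Hdisj
  proof (elim disjE)
    assume "AE x in ?M. \<forall>p. H x p \<ge> norm p powr \<alpha> / CH - CH"
    then show ?thesis
    proof (rule eventually_mono, intro allI)
      fix x and p :: 'a assume "\<forall>p. norm p powr \<alpha> / CH - CH \<le> H x p"
      moreover have "0 \<le> norm p powr \<alpha> / CH" using CH by simp
      ultimately show "- CH \<le> H x p" by (smt (verit))
    qed
  qed (auto elim: eventually_mono)
  have HB: "AE x in ?M. \<forall>p. \<bar>H x p\<bar> \<le> 3 * CH * (1 + norm p powr \<alpha>)"
    using Hreg HB1 Hlow
  proof eventually_elim
    case (elim x)
    show ?case
    proof
      fix p show "\<bar>H x p\<bar> \<le> 3 * CH * (1 + norm p powr \<alpha>)"
        by (rule H_growth[where dh="DH x"]) (use elim expo(1) CH in auto)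
    qed
  qed
  have Hcont: "AE x in ?M. continuous_on UNIV (H x)"
    using Hreg by (rule eventually_mono) (auto intro!: has_derivative_continuous_on)
  have Hum[measurable]: "(\<lambda>x. H x (Du x)) \<in> borel_measurable ?M"
    by (rule caratheodory_measurable[OF Oml _ Dum Hcont]) (use Hmeas in blast)
  have ginj: "a = b" if "0 \<le> a" "0 \<le> b" "g a = g b" for a b
    using strict_mono_on_imp_inj_on[OF gcond(2)] that by (auto dest: inj_onD)
  have glt: "g a < g b" if "0 \<le> a" "a < b" for a b
    using strict_mono_onD[OF gcond(2)] that by auto
  have Gex: "\<exists>t. 0 \<le> t \<and> g t = max y (g 0)" for y
  proof -
    define Y where "Y = max y (g 0)"
    define b where "b = (Cg * (\<bar>Y\<bar> + Cg)) powr (1 / \<beta>)"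
    have b0: "0 \<le> b" unfolding b_def by simp
    have "b powr \<beta> = (Cg * (\<bar>Y\<bar> + Cg)) powr 1"
      unfolding b_def using expo(2) by (simp add: powr_powr)
    also have "\<dots> = Cg * (\<bar>Y\<bar> + Cg)" using Cg(1) by simp
    finally have "b powr \<beta> / Cg - Cg = \<bar>Y\<bar>" using Cg(1) by simp
    then have "Y \<le> g b" using Cg(2)[OF b0] by linarith
    moreover have "g 0 \<le> Y" unfolding Y_def by simp
    moreover have "continuous_on {0..b} g" using gcond(1) by (rule continuous_on_subset) auto
    ultimately obtain t where "0 \<le> t" "t \<le> b" "g t = Y" using IVT'[of g 0 Y b] b0 by blast
    then show ?thesis unfolding Y_def by blast
  qed
  define G where "G y = (SOME t. 0 \<le> t \<and> g t = max y (g 0))" for y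
  have GP: "0 \<le> G y \<and> g (G y) = max y (g 0)" for y
    unfolding G_def by (rule someI_ex[OF Gex])
  have Gmono: "mono G"
  proof (rule monoI, rule ccontr)
    fix y1 y2 :: real assume le: "y1 \<le> y2" and "\<not> G y1 \<le> G y2"
    then have "g (G y2) < g (G y1)" using GP[of y2] by (intro glt) auto
    with GP[of y1] GP[of y2] le show False by auto
  qed
  have GB[measurable]: "G \<in> borel_measurable borel" by (rule borel_measurable_mono[OF Gmono])
  define m where "m x = G (H x (Du x))" for x
  define h where "h x = max (Tu x) 0 powr (\<gamma> - 1)" for x
  have mm[measurable]: "m \<in> borel_measurable ?M" unfolding m_def by measurable
  have mnn: "0 \<le> m x" for x unfolding m_def using GP by blast
  have mg: "g (m x) = max (H x (Du x)) (g 0)" for x unfolding m_def using GP by blast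
  have hm[measurable]: "h \<in> borel_measurable ?SD" unfolding h_def by measurable
  have hnn: "0 \<le> h x" for x unfolding h_def by simp
  have hpow: "h x powr (\<gamma>' - 1) = max (Tu x) 0" for x
    unfolding h_def powr_powr e2 by simp
  have mL: "Lp_fun ?M (\<beta> + 1) m"
    unfolding Lp_fun_def
  proof (intro conjI mm)
    define A where "A = Cg * (3 * CH + \<bar>g 0\<bar> + Cg)"
    define K where "K = (2 * A) powr ((\<beta> + 1) / \<beta>)"
    have A0: "0 < A" unfolding A_def using Cg(1) CH by (simp add: add_pos_nonneg)
    show "integrable ?M (\<lambda>x. \<bar>m x\<bar> powr (\<beta> + 1))"
    proof (rule Bochner_Integration.integrable_bound[where f="\<lambda>x. K * (1 + norm (Du x) powr \<gamma>)"])
      show "integrable ?M (\<lambda>x. K * (1 + norm (Du x) powr \<gamma>))"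
        using intc[of 1] Dui by simp
      show "(\<lambda>x. \<bar>m x\<bar> powr (\<beta> + 1)) \<in> borel_measurable ?M" by measurable
      show "AE x in ?M. norm (\<bar>m x\<bar> powr (\<beta> + 1)) \<le> norm (K * (1 + norm (Du x) powr \<gamma>))"
        using HB
      proof eventually_elim
        case (elim x)
        define t where "t = norm (Du x)"
        define T where "T = t powr \<alpha>"
        have T0: "0 \<le> T" unfolding T_def by simp
        have Hx: "\<bar>H x (Du x)\<bar> \<le> 3 * CH * (1 + T)" using elim unfolding T_def t_def by blast
        have "m x powr \<beta> / Cg - Cg \<le> g (m x)" by (rule Cg(2)[OF mnn])
        then have "m x powr \<beta> \<le> Cg * (g (m x) + Cg)" using Cg(1) by (simp add: field_simps)
        also have "g (m x) \<le> 3 * CH * (1 + T) + \<bar>g 0\<bar>" unfolding mg using Hx by auto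
        then have "Cg * (g (m x) + Cg) \<le> Cg * (3 * CH * (1 + T) + \<bar>g 0\<bar> + Cg)"
          using Cg(1) by (intro mult_left_mono) auto
        also have "\<dots> \<le> A * (1 + T)"
        proof -
          have "(\<bar>g 0\<bar> + Cg) * 1 \<le> (\<bar>g 0\<bar> + Cg) * (1 + T)"
            using T0 Cg(1) by (intro mult_left_mono) auto
          then have "Cg * (\<bar>g 0\<bar> + Cg) \<le> Cg * ((\<bar>g 0\<bar> + Cg) * (1 + T))"
            using Cg(1) by (intro mult_left_mono) auto
          then show ?thesis unfolding A_def by (simp add: algebra_simps)
        qed
        finally have mb: "m x powr \<beta> \<le> A * (1 + t powr \<alpha>)" unfolding T_def .
        have "m x powr (\<beta> + 1) \<le> K * (1 + t powr ((\<beta> + 1) / \<beta> * \<alpha>))"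
          unfolding K_def by (rule m_bound[OF mnn _ expo(2) _ A0 mb]) (use expo(1) t_def in auto)
        then show ?case using mnn[of x] A0 unfolding t_def expo(3) K_def by simp
      qed
    qed
  qed
  have hL: "Lp_fun ?SD \<gamma>' h"
    unfolding Lp_fun_def
  proof (intro conjI hm)
    show "integrable ?SD (\<lambda>x. \<bar>h x\<bar> powr \<gamma>')"
    proof (rule Bochner_Integration.integrable_bound[OF Tui])
      show "(\<lambda>x. \<bar>h x\<bar> powr \<gamma>') \<in> borel_measurable ?SD" by measurable
      show "AE x in ?SD. norm (\<bar>h x\<bar> powr \<gamma>') \<le> norm (\<bar>Tu x\<bar> powr \<gamma>)"
      proof (rule AE_I2)
        fix x
        have "\<bar>h x\<bar> powr \<gamma>' = h x powr \<gamma>'" using hnn[of x] by simp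
        also have "\<dots> = max (Tu x) 0 powr ((\<gamma> - 1) * \<gamma>')" unfolding h_def by (rule powr_powr)
        also have "\<dots> = max (Tu x) 0 powr \<gamma>" unfolding e1 ..
        finally have "\<bar>h x\<bar> powr \<gamma>' = max (Tu x) 0 powr \<gamma>" .
        also have "\<dots> \<le> \<bar>Tu x\<bar> powr \<gamma>" using g1 by (intro powr_mono2) auto
        finally show "norm (\<bar>h x\<bar> powr \<gamma>') \<le> norm (\<bar>Tu x\<bar> powr \<gamma>)" by simp
      qed
    qed
  qed
  have Kmem: "(m, h) \<in> K_set \<Omega> \<Gamma>D \<beta> \<gamma>'"
    unfolding K_set_def using mL hL mnn hnn by auto
  have VIex: "\<forall>\<mu> k. (\<mu>, k) \<in> K_set \<Omega> \<Gamma>D \<beta> \<gamma>' \<longrightarrow>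
              pairing_A \<Omega> \<Gamma>D H g \<gamma>' Du Tu m h (\<lambda>x. \<mu> x - m x) (\<lambda>x. k x - h x) \<ge> 0"
  proof (intro allI impI)
    fix \<mu> k assume "(\<mu>, k) \<in> K_set \<Omega> \<Gamma>D \<beta> \<gamma>'"
    then have \<mu>nn: "AE x in ?M. 0 \<le> \<mu> x" and knn: "AE x in ?SD. 0 \<le> k x"
      unfolding K_set_def by auto
    have I1: "0 \<le> integral\<^sup>L ?M (\<lambda>x. (- H x (Du x) + g (m x)) * (\<mu> x - m x))"
      using \<mu>nn
    proof (intro integral_nonneg_AE, eventually_elim)
      case (elim x)
      show ?case
      proof (cases "g 0 \<le> H x (Du x)")
        case True then show ?thesis using mg[of x] by simp
      next
        case False
        then have "g (m x) = g 0" using mg[of x] by simp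
        then have "m x = 0" using ginj[OF mnn[of x], of 0] by simp
        then show ?thesis using False elim \<open>g (m x) = g 0\<close> by simp
      qed
    qed
    have I2: "0 \<le> integral\<^sup>L ?SD (\<lambda>x. (- Tu x + h x powr (\<gamma>' - 1)) * (k x - h x))"
      using knn
    proof (intro integral_nonneg_AE, eventually_elim)
      case (elim x)
      show ?case
      proof (cases "0 < Tu x")
        case True then show ?thesis unfolding hpow by simp
      next
        case False
        then have "h x = 0" unfolding h_def by simp
        then show ?thesis unfolding hpow using False elim by (simp add: mult_nonpos_nonneg)
      qed
    qed
    show "pairing_A \<Omega> \<Gamma>D H g \<gamma>' Du Tu m h (\<lambda>x. \<mu> x - m x) (\<lambda>x. k x - h x) \<ge> 0"
      unfolding pairing_A_def using I1 I2 by simp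
  qed
  have Uniq: "\<forall>m' h'. (m', h') \<in> K_set \<Omega> \<Gamma>D \<beta> \<gamma>' \<and>
              (\<forall>\<mu> k. (\<mu>, k) \<in> K_set \<Omega> \<Gamma>D \<beta> \<gamma>' \<longrightarrow>
                 pairing_A \<Omega> \<Gamma>D H g \<gamma>' Du Tu m' h' (\<lambda>x. \<mu> x - m' x) (\<lambda>x. k x - h' x) \<ge> 0)
              \<longrightarrow> (AE x in lebesgue_on \<Omega>. m' x = m x) \<and> (AE x in surface \<Gamma>D. h' x = h x)"
  proof (intro allI impI, elim conjE)
    fix m' h' assume K': "(m', h') \<in> K_set \<Omega> \<Gamma>D \<beta> \<gamma>'"
      and VI': "\<forall>\<mu> k. (\<mu>, k) \<in> K_set \<Omega> \<Gamma>D \<beta> \<gamma>' \<longrightarrow>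
                 pairing_A \<Omega> \<Gamma>D H g \<gamma>' Du Tu m' h' (\<lambda>x. \<mu> x - m' x) (\<lambda>x. k x - h' x) \<ge> 0"
    from K' have m'L: "Lp_fun ?M (\<beta> + 1) m'" and m'nn: "AE x in ?M. 0 \<le> m' x"
      and h'L: "Lp_fun ?SD \<gamma>' h'" and h'nn: "AE x in ?SD. 0 \<le> h' x"
      unfolding K_set_def by auto
    have m'm[measurable]: "m' \<in> borel_measurable ?M" using m'L by (simp add: Lp_fun_def)
    have h'm[measurable]: "h' \<in> borel_measurable ?SD" and h'i: "integrable ?SD (\<lambda>x. \<bar>h' x\<bar> powr \<gamma>')"
      using h'L by (auto simp: Lp_fun_def)
    show "(AE x in lebesgue_on \<Omega>. m' x = m x) \<and> (AE x in surface \<Gamma>D. h' x = h x)"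
    proof
      define \<phi> where "\<phi> x = - H x (Du x) + g (m' x)" for x
      have gc: "continuous_on UNIV (\<lambda>y. g (max y 0))"
        by (rule continuous_on_compose2[OF gcond(1)]) (auto intro!: continuous_intros)
      have gmB[measurable]: "(\<lambda>y. g (max y 0)) \<in> borel_measurable borel"
        by (rule borel_measurable_continuous_onI[OF gc])
      have phim: "\<phi> \<in> borel_measurable ?M"
      proof (rule lebesgue_on_AE_meas[OF Oml])
        show "(\<lambda>x. - H x (Du x) + g (max (m' x) 0)) \<in> borel_measurable ?M" by measurable
        show "AE x in ?M. - H x (Du x) + g (max (m' x) 0) = \<phi> x"
          using m'nn by (rule eventually_mono) (simp add: \<phi>_def)
      qed
      have R1: "AE x in ?M. 0 \<le> \<phi> x \<and> (0 < m' x \<longrightarrow> \<phi> x = 0)"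
      proof (rule vi_pointwise[OF phim m'L m'nn _ _ _ _ ])
        show "0 < \<beta> + 1" using expo(2) by simp
        show "space ?M \<in> sets ?M" by simp
        show "integrable ?M (\<lambda>x. indicator (space ?M) x :: real)" by (rule intS)
        show "AE x in ?M. (\<phi> x < 0 \<or> (0 < m' x \<and> 0 < \<phi> x)) \<longrightarrow> (\<exists>n::nat. x \<in> space ?M)"
          by (rule AE_I2) blast
      next
        fix k assume kL: "Lp_fun ?M (\<beta> + 1) k" and knn: "AE x in ?M. 0 \<le> k x"
        have "(k, h') \<in> K_set \<Omega> \<Gamma>D \<beta> \<gamma>'" unfolding K_set_def using kL knn h'L h'nn by auto
        then have "pairing_A \<Omega> \<Gamma>D H g \<gamma>' Du Tu m' h' (\<lambda>x. k x - m' x) (\<lambda>x. h' x - h' x) \<ge> 0"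
          using VI' by blast
        then show "0 \<le> integral\<^sup>L ?M (\<lambda>x. \<phi> x * (k x - m' x))"
          unfolding pairing_A_def \<phi>_def by simp
      qed
      show "AE x in lebesgue_on \<Omega>. m' x = m x"
        using R1 m'nn
      proof eventually_elim
        case (elim x)
        show ?case
        proof (cases "0 < m' x")
          case True
          then have e: "g (m' x) = H x (Du x)" using elim by (simp add: \<phi>_def)
          have "g 0 < g (m' x)" using glt[of 0 "m' x"] True by simp
          then have "g (m x) = g (m' x)" unfolding mg e by simp
          then show ?thesis using ginj[OF mnn[of x] elim(2)] by simp
        next
          case False
          then have m0: "m' x = 0" using elim by simp
          then have "H x (Du x) \<le> g 0" using elim by (simp add: \<phi>_def)
          then have "g (m x) = g 0" unfolding mg by simp
          then have "m x = 0" using ginj[OF mnn[of x], of 0] by simp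
          then show ?thesis using m0 by simp
        qed
      qed
    next
      define \<phi> where "\<phi> x = - Tu x + h' x powr (\<gamma>' - 1)" for x
      have phim[measurable]: "\<phi> \<in> borel_measurable ?SD" unfolding \<phi>_def by measurable
      define S where "S n = {x \<in> space ?SD. 1 \<le> real (Suc n) * \<bar>Tu x\<bar> powr \<gamma> \<or> 1 \<le> real (Suc n) * \<bar>h' x\<bar> powr \<gamma>'}" for n
      have Sm[measurable]: "S n \<in> sets ?SD" for n unfolding S_def by measurable
      have arch: "\<exists>n. x \<in> S n" if x: "x \<in> space ?SD" and a: "0 < \<bar>Tu x\<bar> powr \<gamma> \<or> 0 < \<bar>h' x\<bar> powr \<gamma>'" for x
      proof -
        have "\<exists>n. 1 \<le> real (Suc n) * a" if "0 < a" for a :: real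
        proof -
          obtain n where "1 / a < real n" using reals_Archimedean2 by blast
          then have "1 < real n * a" using that by (simp add: field_simps)
          then have "1 \<le> real (Suc n) * a" using that by (simp add: algebra_simps)
          then show ?thesis by blast
        qed
        then show ?thesis using a x unfolding S_def by blast
      qed
      have R2: "AE x in ?SD. 0 \<le> \<phi> x \<and> (0 < h' x \<longrightarrow> \<phi> x = 0)"
      proof (rule vi_pointwise[OF phim h'L h'nn gp0 Sm])
        fix n
        show "integrable ?SD (\<lambda>x. indicator (S n) x :: real)"
        proof (rule Bochner_Integration.integrable_bound[where f="\<lambda>x. real (Suc n) * \<bar>Tu x\<bar> powr \<gamma> + real (Suc n) * \<bar>h' x\<bar> powr \<gamma>'"])
          show "integrable ?SD (\<lambda>x. real (Suc n) * \<bar>Tu x\<bar> powr \<gamma> + real (Suc n) * \<bar>h' x\<bar> powr \<gamma>')"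
            using Tui h'i by simp
          show "(\<lambda>x. indicator (S n) x :: real) \<in> borel_measurable ?SD" by measurable
          show "AE x in ?SD. norm (indicator (S n) x :: real) \<le> norm (real (Suc n) * \<bar>Tu x\<bar> powr \<gamma> + real (Suc n) * \<bar>h' x\<bar> powr \<gamma>')"
          proof (rule AE_I2)
            fix x
            have p1: "0 \<le> real (Suc n) * \<bar>Tu x\<bar> powr \<gamma>" "0 \<le> real (Suc n) * \<bar>h' x\<bar> powr \<gamma>'" by simp_all
            show "norm (indicator (S n) x :: real) \<le> norm (real (Suc n) * \<bar>Tu x\<bar> powr \<gamma> + real (Suc n) * \<bar>h' x\<bar> powr \<gamma>')"
            proof (cases "x \<in> S n")
              case True
              then have "1 \<le> real (Suc n) * \<bar>Tu x\<bar> powr \<gamma> \<or> 1 \<le> real (Suc n) * \<bar>h' x\<bar> powr \<gamma>'"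
                unfolding S_def by blast
              then have "1 \<le> real (Suc n) * \<bar>Tu x\<bar> powr \<gamma> + real (Suc n) * \<bar>h' x\<bar> powr \<gamma>'"
                using p1 by (elim disjE) linarith+
              then show ?thesis using True by (simp del: of_nat_Suc)
            next
              case False then show ?thesis using p1 by simp
            qed
          qed
        qed
      next
        show "AE x in ?SD. (\<phi> x < 0 \<or> (0 < h' x \<and> 0 < \<phi> x)) \<longrightarrow> (\<exists>n. x \<in> S n)"
          using h'nn
        proof (rule AE_mp, intro AE_I2 impI)
          fix x assume x: "x \<in> space ?SD" and hx: "0 \<le> h' x" and c: "\<phi> x < 0 \<or> (0 < h' x \<and> 0 < \<phi> x)"
          show "\<exists>n. x \<in> S n"
          proof (rule arch[OF x])
            show "0 < \<bar>Tu x\<bar> powr \<gamma> \<or> 0 < \<bar>h' x\<bar> powr \<gamma>'"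
            proof (cases "\<phi> x < 0")
              case True
              have "0 \<le> h' x powr (\<gamma>' - 1)" by simp
              then have "Tu x \<noteq> 0" using True unfolding \<phi>_def by auto
              then show ?thesis by simp
            next
              case False
              then have "h' x \<noteq> 0" using c by auto
              then show ?thesis by simp
            qed
          qed
        qed
      next
        fix k assume kL: "Lp_fun ?SD \<gamma>' k" and knn: "AE x in ?SD. 0 \<le> k x"
        have "(m', k) \<in> K_set \<Omega> \<Gamma>D \<beta> \<gamma>'" unfolding K_set_def using kL knn m'L m'nn by auto
        then have "pairing_A \<Omega> \<Gamma>D H g \<gamma>' Du Tu m' h' (\<lambda>x. m' x - m' x) (\<lambda>x. k x - h' x) \<ge> 0"
          using VI' by blast
        then show "0 \<le> integral\<^sup>L ?SD (\<lambda>x. \<phi> x * (k x - h' x))"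
          unfolding pairing_A_def \<phi>_def by simp
      qed
      show "AE x in surface \<Gamma>D. h' x = h x"
        using R2 h'nn
      proof eventually_elim
        case (elim x)
        show ?case
        proof (cases "0 < h' x")
          case True
          then have e: "h' x powr (\<gamma>' - 1) = Tu x" using elim by (simp add: \<phi>_def)
          have "0 < h' x powr (\<gamma>' - 1)" using True by simp
          then have Tp: "0 < Tu x" using e by simp
          have "h x = Tu x powr (\<gamma> - 1)" unfolding h_def using Tp by simp
          also have "\<dots> = h' x powr ((\<gamma>' - 1) * (\<gamma> - 1))" unfolding e[symmetric] powr_powr ..
          also have "\<dots> = h' x" using e2 True by (simp add: mult.commute)
          finally show ?thesis by simp
        next
          case False
          then have h0: "h' x = 0" using elim by simp
          then have "Tu x \<le> 0" using elim by (simp add: \<phi>_def)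
          then have "h x = 0" unfolding h_def by simp
          then show ?thesis using h0 by simp
        qed
      qed
    qed
  qed
  show ?thesis using Kmem VIex Uniq by blast
qed

end
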